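(* Fix $1<p<\infty$. Let $X$ and $Y$ be Banach spaces such that $X$ has the approximation property and $\mathcal A(X,Y)\subsetneq\mathcal K(X,Y)$. Let $Z_p:=\big(\bigoplus_{j=0}^\infty X_j\big)_{\ell^p}$ with $X_0=Y$ and $X_j=X$ for $j\ge1$, and for $\emptyset\neq A\subsetneq\mathbb N$ let \[ \mathcal I_A:=\{S\in\mathcal K(Z_p): P_0SJ_0\in\mathcal A(Y),\ P_0SJ_k\in\mathcal A(X,Y)\text{ for all }k\in A\}. \] Suppose $\emptyset\neq A,B\subsetneq\mathbb N$ and there is a permutation $\sigma:\mathbb N\to\mathbb N$ with $\sigma(A)=B$. Then $\mathcal I_A$ and $\mathcal I_B$ are isomorphic as Banach algebras. In particular this holds whenever $|A|=|B|\in\mathbb N\cup\{\infty\}$ and $|\mathbb N\setminus A|=|\mathbb N\setminus B|\in\mathbb N\cup\{\infty\}$.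
   Context: $\mathbb N=\{1,2,3,\ldots\}$; $|A|$ denotes cardinality. For Banach spaces $E,F$, $\mathcal K(E,F)$ denotes the compact operators and $\mathcal A(E,F)$ the operator-norm closure of the finite-rank operators $E\to F$; $\mathcal A(E)=\mathcal A(E,E)$. $P_m:Z_p\to X_m$ and $J_n:X_n\to Z_p$ ($m,n\ge0$) are the natural coordinate projections and inclusions. *)

theory Defs
  imports "HOL-Analysis.Analysis"
begin

definition finite_rank :: "('a::real_normed_vector \<Rightarrow> 'b::real_normed_vector) \<Rightarrow> bool" where
  "finite_rank T \<longleftrightarrow> bounded_linear T \<and> (\<exists>B. finite B \<and> range T \<subseteq> span B)"

definition approximable_op :: "('a::real_normed_vector \<Rightarrow> 'b::real_normed_vector) \<Rightarrow> bool" where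
  "approximable_op T \<longleftrightarrow> bounded_linear T \<and>
     (\<forall>e>0. \<exists>F. finite_rank F \<and> onorm (\<lambda>x. T x - F x) < e)"

definition compact_op :: "('a::real_normed_vector \<Rightarrow> 'b::real_normed_vector) \<Rightarrow> bool" where
  "compact_op T \<longleftrightarrow> bounded_linear T \<and> compact (closure (T ` cball 0 1))"

definition approximation_property :: "'a::banach itself \<Rightarrow> bool" where
  "approximation_property _ \<longleftrightarrow>
     (\<forall>K::'a set. compact K \<longrightarrow> (\<forall>e>0. \<exists>T::'a \<Rightarrow> 'a. finite_rank T \<and> (\<forall>x\<in>K. norm (T x - x) < e)))"

text \<open>An element of \<open>Z_p\<close> is represented by a pair (y, f): y is the 0-th coordinate
  (in Y) and f j is the j-th coordinate (in X) for j \<ge> 1; by convention f 0 = 0.\<close>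

definition Zp :: "real \<Rightarrow> ('y::banach \<times> (nat \<Rightarrow> 'x::banach)) set" where
  "Zp p = {(y, f). f 0 = 0 \<and> summable (\<lambda>j. norm (f j) powr p)}"

definition znorm :: "real \<Rightarrow> ('y::banach \<times> (nat \<Rightarrow> 'x::banach)) \<Rightarrow> real" where
  "znorm p z = (norm (fst z) powr p + (\<Sum>j. norm (snd z j) powr p)) powr (1 / p)"

definition zadd :: "('y::banach \<times> (nat \<Rightarrow> 'x::banach)) \<Rightarrow> ('y \<times> (nat \<Rightarrow> 'x)) \<Rightarrow> ('y \<times> (nat \<Rightarrow> 'x))" where
  "zadd z w = (fst z + fst w, \<lambda>j. snd z j + snd w j)"

definition zscale :: "real \<Rightarrow> ('y::banach \<times> (nat \<Rightarrow> 'x::banach)) \<Rightarrow> ('y \<times> (nat \<Rightarrow> 'x))" where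
  "zscale c z = (c *\<^sub>R fst z, \<lambda>j. c *\<^sub>R snd z j)"

definition zzero :: "'y::banach \<times> (nat \<Rightarrow> 'x::banach)" where
  "zzero = (0, \<lambda>_. 0)"

definition zminus :: "('y::banach \<times> (nat \<Rightarrow> 'x::banach)) \<Rightarrow> ('y \<times> (nat \<Rightarrow> 'x)) \<Rightarrow> ('y \<times> (nat \<Rightarrow> 'x))" where
  "zminus z w = zadd z (zscale (-1) w)"

definition P0 :: "('y::banach \<times> (nat \<Rightarrow> 'x::banach)) \<Rightarrow> 'y" where
  "P0 z = fst z"

definition J0 :: "'y::banach \<Rightarrow> ('y \<times> (nat \<Rightarrow> 'x::banach))" where
  "J0 y = (y, \<lambda>_. 0)"

definition Jk :: "nat \<Rightarrow> 'x::banach \<Rightarrow> ('y::banach \<times> (nat \<Rightarrow> 'x))" where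
  "Jk k x = (0, \<lambda>j. if j = k then x else 0)"   (* used for k \<ge> 1 *)

text \<open>Bounded operators on \<open>Z_p\<close>: linear maps of \<open>Z_p\<close> into itself, bounded for the
  \<open>\<ell>^p\<close>-norm; extensional (value \<open>zzero\<close> outside \<open>Z_p\<close>) so that operators are
  determined by their action on \<open>Z_p\<close>.\<close>
definition Bz :: "real \<Rightarrow> (('y::banach \<times> (nat \<Rightarrow> 'x::banach)) \<Rightarrow> ('y \<times> (nat \<Rightarrow> 'x))) set" where
  "Bz p = {S. (\<forall>z\<in>Zp p. S z \<in> Zp p)
           \<and> (\<forall>z\<in>Zp p. \<forall>w\<in>Zp p. S (zadd z w) = zadd (S z) (S w))
           \<and> (\<forall>c. \<forall>z\<in>Zp p. S (zscale c z) = zscale c (S z))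
           \<and> (\<exists>C. \<forall>z\<in>Zp p. znorm p (S z) \<le> C * znorm p z)
           \<and> (\<forall>z. z \<notin> Zp p \<longrightarrow> S z = zzero)}"

definition opnorm_z :: "real \<Rightarrow> (('y::banach \<times> (nat \<Rightarrow> 'x::banach)) \<Rightarrow> ('y \<times> (nat \<Rightarrow> 'x))) \<Rightarrow> real" where
  "opnorm_z p S = (SUP z\<in>{z\<in>Zp p. znorm p z \<le> 1}. znorm p (S z))"

definition Kz :: "real \<Rightarrow> (('y::banach \<times> (nat \<Rightarrow> 'x::banach)) \<Rightarrow> ('y \<times> (nat \<Rightarrow> 'x))) set" where
  "Kz p = {S\<in>Bz p. \<forall>u::nat \<Rightarrow> ('y \<times> (nat \<Rightarrow> 'x)).
              (\<forall>n. u n \<in> Zp p \<and> znorm p (u n) \<le> 1) \<longrightarrow>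
              (\<exists>r z. strict_mono r \<and> z \<in> Zp p \<and>
                     (\<lambda>n. znorm p (zminus (S (u (r n))) z)) \<longlonglongrightarrow> 0)}"

definition IA :: "real \<Rightarrow> nat set \<Rightarrow> (('y::banach \<times> (nat \<Rightarrow> 'x::banach)) \<Rightarrow> ('y \<times> (nat \<Rightarrow> 'x))) set" where
  "IA p A = {S\<in>Kz p. approximable_op (\<lambda>y::'y. P0 (S (J0 y)))
                  \<and> (\<forall>k\<in>A. approximable_op (\<lambda>x::'x. P0 (S (Jk k x))))}"

definition banach_alg_iso ::
  "real \<Rightarrow> (('y::banach \<times> (nat \<Rightarrow> 'x::banach)) \<Rightarrow> ('y \<times> (nat \<Rightarrow> 'x))) set
        \<Rightarrow> (('y \<times> (nat \<Rightarrow> 'x)) \<Rightarrow> ('y \<times> (nat \<Rightarrow> 'x))) set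
        \<Rightarrow> ((('y \<times> (nat \<Rightarrow> 'x)) \<Rightarrow> ('y \<times> (nat \<Rightarrow> 'x))) \<Rightarrow> (('y \<times> (nat \<Rightarrow> 'x)) \<Rightarrow> ('y \<times> (nat \<Rightarrow> 'x)))) \<Rightarrow> bool" where
  "banach_alg_iso p I J \<Phi> \<longleftrightarrow>
     bij_betw \<Phi> I J
     \<and> (\<forall>S\<in>I. \<forall>T\<in>I. \<Phi> (\<lambda>z. zadd (S z) (T z)) = (\<lambda>z. zadd (\<Phi> S z) (\<Phi> T z)))
     \<and> (\<forall>c. \<forall>S\<in>I. \<Phi> (\<lambda>z. zscale c (S z)) = (\<lambda>z. zscale c (\<Phi> S z)))
     \<and> (\<forall>S\<in>I. \<forall>T\<in>I. \<Phi> (S \<circ> T) = \<Phi> S \<circ> \<Phi> T)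
     \<and> (\<exists>C. \<forall>S\<in>I. opnorm_z p (\<Phi> S) \<le> C * opnorm_z p S)
     \<and> (\<exists>C. \<forall>S\<in>I. opnorm_z p S \<le> C * opnorm_z p (\<Phi> S))"

definition isomorphic_banach_alg ::
  "real \<Rightarrow> (('y::banach \<times> (nat \<Rightarrow> 'x::banach)) \<Rightarrow> ('y \<times> (nat \<Rightarrow> 'x))) set
        \<Rightarrow> (('y \<times> (nat \<Rightarrow> 'x)) \<Rightarrow> ('y \<times> (nat \<Rightarrow> 'x))) set \<Rightarrow> bool" where
  "isomorphic_banach_alg p I J \<longleftrightarrow> (\<exists>\<Phi>. banach_alg_iso p I J \<Phi>)"

end

theory Submission
  imports Defs
begin

lemma perm_sum:
  fixes g :: "nat \<Rightarrow> real"
  assumes t: "bij t" and g: "\<And>n. g n \<ge> 0"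
  shows "summable (\<lambda>n. g (t n)) \<longleftrightarrow> summable g"
    and "(\<Sum>n. g (t n)) = (\<Sum>n. g n)"
proof -
  have b: "bij_betw t UNIV UNIV" using t by (simp add: bij_def bij_betw_def)
  have e1: "summable (\<lambda>n. g (t n)) \<longleftrightarrow> (\<lambda>n. g (t n)) summable_on UNIV"
    using summable_on_UNIV_nonneg_real_iff[of "\<lambda>n. g (t n)"] g by simp
  have e2: "summable g \<longleftrightarrow> g summable_on UNIV"
    using summable_on_UNIV_nonneg_real_iff[of g] g by simp
  show S: "summable (\<lambda>n. g (t n)) \<longleftrightarrow> summable g"
    using e1 e2 summable_on_reindex_bij_betw[OF b, of g] by simp
  show "(\<Sum>n. g (t n)) = (\<Sum>n. g n)"
  proof (cases "summable g")
    case True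
    have "g sums infsum g UNIV"
      using True e2 has_sum_imp_sums has_sum_infsum by blast
    moreover have "(\<lambda>n. g (t n)) sums infsum (\<lambda>n. g (t n)) UNIV"
      using True e1 S has_sum_imp_sums has_sum_infsum by blast
    ultimately show ?thesis using infsum_reindex_bij_betw[OF b, of g] sums_unique by metis
  next
    case False
    hence "\<And>s. \<not> g sums s" "\<And>s. \<not> (\<lambda>n. g (t n)) sums s" using S sums_summable by blast+
    hence "(\<lambda>s. g sums s) = (\<lambda>s. False)" "(\<lambda>s. (\<lambda>n. g (t n)) sums s) = (\<lambda>s. False)" by auto
    thus ?thesis unfolding suminf_def by metis
  qed
qed

lemma nat_set_bij:
  fixes A B :: "nat set"
  assumes "(finite A \<and> finite B \<and> card A = card B) \<or> (infinite A \<and> infinite B)"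
  shows "\<exists>f. bij_betw f A B"
  using assms
proof
  assume "finite A \<and> finite B \<and> card A = card B"
  thus ?thesis using finite_same_card_bij by blast
next
  assume i: "infinite A \<and> infinite B"
  have c: "countable A" "countable B" by (auto intro: countable_subset[OF subset_UNIV countableI_type])
  have "bij_betw (from_nat_into A) UNIV A" "bij_betw (from_nat_into B) UNIV B"
    using bij_betw_from_nat_into[OF c(1)] bij_betw_from_nat_into[OF c(2)] i by auto
  thus ?thesis using bij_betw_trans bij_betw_inv_into by blast
qed

lemma get_perm:
  fixes A B :: "nat set"
  assumes A: "A \<subset> {1..}" and B: "B \<subset> {1..}"
    and perm: "(\<exists>\<sigma>. bij_betw \<sigma> {1..} {1..} \<and> \<sigma> ` A = B)
             \<or> (((finite A \<and> finite B \<and> card A = card B) \<or> (infinite A \<and> infinite B))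
                \<and> ((finite ({1..} - A) \<and> finite ({1..} - B) \<and> card ({1..} - A) = card ({1..} - B))
                   \<or> (infinite ({1..} - A) \<and> infinite ({1..} - B))))"
  shows "\<exists>t. bij t \<and> t 0 = 0 \<and> t ` A = B"
proof -
  obtain s where s: "bij_betw s {1..} {1..}" "s ` A = B"
  proof (cases "\<exists>\<sigma>. bij_betw \<sigma> {1..} {1..} \<and> \<sigma> ` A = B")
    case True thus ?thesis using that by blast
  next
    case False
    then obtain f g where f: "bij_betw f A B" and g: "bij_betw g ({1..} - A) ({1..} - B)"
      using perm nat_set_bij by meson
    define s where "s n = (if n \<in> A then f n else g n)" for n
    have "bij_betw s A B" using f by (rule bij_betw_cong[THEN iffD1, rotated]) (simp add: s_def)
    moreover have "bij_betw s ({1..} - A) ({1..} - B)"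
      using g by (rule bij_betw_cong[THEN iffD1, rotated]) (simp add: s_def)
    ultimately have "bij_betw s (A \<union> ({1..} - A)) (B \<union> ({1..} - B))"
      by (intro bij_betw_combine) auto
    moreover have "A \<union> ({1..} - A) = {1..}" "B \<union> ({1..} - B) = {1..}" using A B by auto
    moreover have "s ` A = B" using f \<open>bij_betw s A B\<close> by (simp add: bij_betw_def)
    ultimately show ?thesis using that by auto
  qed
  define t where "t n = (if n = 0 then 0 else s n)" for n
  have "bij_betw t {0} {0}" by (simp add: t_def bij_betw_def)
  moreover have "bij_betw t {1..} {1..}"
    using s(1) by (rule bij_betw_cong[THEN iffD1, rotated]) (simp add: t_def)
  ultimately have "bij_betw t ({0} \<union> {1..}) ({0} \<union> {1..})" by (intro bij_betw_combine) auto
  moreover have "{0} \<union> {1::nat..} = UNIV" by auto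
  ultimately have "bij_betw t UNIV UNIV" by metis
  hence "bij t" by (simp add: bij_def)
  moreover have "t ` A = B" using s(2) A by (force simp: t_def image_def)
  moreover have "t 0 = 0" by (simp add: t_def)
  ultimately show ?thesis by blast
qed
definition permz :: "(nat \<Rightarrow> nat) \<Rightarrow> ('y::banach \<times> (nat \<Rightarrow> 'x::banach)) \<Rightarrow> ('y \<times> (nat \<Rightarrow> 'x))" where
  "permz t z = (fst z, \<lambda>j. snd z (t j))"

definition conjz :: "(nat \<Rightarrow> nat) \<Rightarrow> (('y::banach \<times> (nat \<Rightarrow> 'x::banach)) \<Rightarrow> ('y \<times> (nat \<Rightarrow> 'x))) \<Rightarrow> (('y \<times> (nat \<Rightarrow> 'x)) \<Rightarrow> ('y \<times> (nat \<Rightarrow> 'x)))" where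
  "conjz t S = (\<lambda>z. permz (inv t) (S (permz t z)))"

lemma permz_ops:
  "permz t (zadd a b) = zadd (permz t a) (permz t b)"
  "permz t (zscale c a) = zscale c (permz t a)"
  "permz t (zminus a b) = zminus (permz t a) (permz t b)"
  "permz t zzero = zzero"
  "P0 (permz t a) = P0 a"
  "permz t (J0 y) = J0 y"
  by (simp_all add: permz_def zadd_def zscale_def zminus_def zzero_def P0_def J0_def)

lemma permz_inv:
  assumes "bij t"
  shows "permz t (permz (inv t) z) = z" "permz (inv t) (permz t z) = z"
  using assms by (simp_all add: permz_def bij_inv_eq_iff inv_f_f bij_is_inj surj_f_inv_f bij_is_surj)

lemma permz_Jk:
  assumes "bij t"
  shows "permz t (Jk k x) = Jk (inv t k) x"
  using assms unfolding permz_def Jk_def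
  by (auto simp: fun_eq_iff bij_inv_eq_iff)

lemma permz_Zp:
  assumes t: "bij t" "t 0 = 0"
  shows "permz t z \<in> Zp p \<longleftrightarrow> z \<in> Zp p"
proof -
  obtain y f where z: "z = (y, f)" by (cases z)
  have "summable (\<lambda>j. norm (f (t j)) powr p) \<longleftrightarrow> summable (\<lambda>j. norm (f j) powr p)"
    using perm_sum(1)[OF t(1), of "\<lambda>j. norm (f j) powr p"] by simp
  thus ?thesis using t(2) by (simp add: z permz_def Zp_def)
qed

lemma permz_norm:
  assumes t: "bij t"
  shows "znorm p (permz t z) = znorm p z"
proof -
  have "(\<Sum>j. norm (snd z (t j)) powr p) = (\<Sum>j. norm (snd z j) powr p)"
    using perm_sum(2)[OF t(1), of "\<lambda>j. norm (snd z j) powr p"] by simp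
  thus ?thesis by (simp add: znorm_def permz_def)
qed

lemma inv_props:
  assumes "bij t" "t 0 = 0"
  shows "bij (inv t)" "inv t 0 = 0"
  using assms by (auto simp: bij_imp_bij_inv) (metis bij_is_inj inv_f_f)

lemma conjz_Bz:
  fixes S :: "('y::banach \<times> (nat \<Rightarrow> 'x::banach)) \<Rightarrow> ('y \<times> (nat \<Rightarrow> 'x))"
  assumes t: "bij t" "t 0 = 0" and S: "S \<in> Bz p"
  shows "conjz t S \<in> Bz p"
proof -
  note it = inv_props[OF t]
  from S have S1: "\<forall>z\<in>Zp p. S z \<in> Zp p"
    and S2: "\<forall>z\<in>Zp p. \<forall>w\<in>Zp p. S (zadd z w) = zadd (S z) (S w)"
    and S3: "\<forall>c. \<forall>z\<in>Zp p. S (zscale c z) = zscale c (S z)"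
    and S4: "\<exists>C. \<forall>z\<in>Zp p. znorm p (S z) \<le> C * znorm p z"
    and S5: "\<forall>z. z \<notin> Zp p \<longrightarrow> S z = zzero" unfolding Bz_def by blast+
  obtain C where C: "\<forall>z\<in>Zp p. znorm p (S z) \<le> C * znorm p z" using S4 by blast
  show ?thesis unfolding Bz_def conjz_def
  proof (intro CollectI conjI ballI allI impI)
    fix z :: "'y \<times> (nat \<Rightarrow> 'x)" assume "z \<in> Zp p" thus "permz (inv t) (S (permz t z)) \<in> Zp p" using S1 permz_Zp[OF t] permz_Zp[OF it] by blast
  next
    fix z w :: "'y \<times> (nat \<Rightarrow> 'x)" assume "z \<in> Zp p" "w \<in> Zp p"
    thus "permz (inv t) (S (permz t (zadd z w))) = zadd (permz (inv t) (S (permz t z))) (permz (inv t) (S (permz t w)))"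
      using S2 by (simp add: permz_ops permz_Zp[OF t])
  next
    fix c and z :: "'y \<times> (nat \<Rightarrow> 'x)" assume "z \<in> Zp p"
    thus "permz (inv t) (S (permz t (zscale c z))) = zscale c (permz (inv t) (S (permz t z)))"
      using S3 by (simp add: permz_ops permz_Zp[OF t])
  next
    show "\<exists>C. \<forall>z\<in>Zp p. znorm p (permz (inv t) (S (permz t z))) \<le> C * znorm p z"
    proof (intro exI[of _ C] ballI)
      fix z :: "'y \<times> (nat \<Rightarrow> 'x)" assume "z \<in> Zp p"
      hence "permz t z \<in> Zp p" by (simp add: permz_Zp[OF t])
      from C[rule_format, OF this]
      show "znorm p (permz (inv t) (S (permz t z))) \<le> C * znorm p z"
        by (simp add: permz_norm[OF it(1)] permz_norm[OF t(1)])
    qed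
  next
    fix z :: "'y \<times> (nat \<Rightarrow> 'x)" assume "z \<notin> Zp p" show "permz (inv t) (S (permz t z)) = zzero"
    proof -
      have "permz t z \<notin> Zp p" using \<open>z \<notin> Zp p\<close> by (simp add: permz_Zp[OF t])
      hence "S (permz t z) = zzero" using S5 by blast
      thus ?thesis by (simp add: permz_ops)
    qed
  qed
qed

lemma conjz_Kz:
  fixes S :: "('y::banach \<times> (nat \<Rightarrow> 'x::banach)) \<Rightarrow> ('y \<times> (nat \<Rightarrow> 'x))"
  assumes t: "bij t" "t 0 = 0" and S: "S \<in> Kz p"
  shows "conjz t S \<in> Kz p"
proof -
  note it = inv_props[OF t]
  have B: "conjz t S \<in> Bz p" using S unfolding Kz_def by (blast intro: conjz_Bz[OF t])
  show ?thesis unfolding Kz_def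
  proof (intro CollectI conjI B allI impI)
    fix u :: "nat \<Rightarrow> ('y \<times> (nat \<Rightarrow> 'x))"
    assume u: "\<forall>n. u n \<in> Zp p \<and> znorm p (u n) \<le> 1"
    have "\<forall>n. permz t (u n) \<in> Zp p \<and> znorm p (permz t (u n)) \<le> 1"
      using u by (simp add: permz_Zp[OF t] permz_norm[OF t(1)])
    moreover have "\<forall>u::nat \<Rightarrow> ('y \<times> (nat \<Rightarrow> 'x)).
              (\<forall>n. u n \<in> Zp p \<and> znorm p (u n) \<le> 1) \<longrightarrow>
              (\<exists>r z. strict_mono r \<and> z \<in> Zp p \<and>
                     (\<lambda>n. znorm p (zminus (S (u (r n))) z)) \<longlonglongrightarrow> 0)"
      using S unfolding Kz_def by blast
    ultimately obtain r z where rz: "strict_mono r" "z \<in> Zp p"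
      "(\<lambda>n. znorm p (zminus (S (permz t (u (r n)))) z)) \<longlonglongrightarrow> 0"
      using spec[of _ "\<lambda>n. permz t (u n)"] by blast
    have "(\<lambda>n. znorm p (zminus (conjz t S (u (r n))) (permz (inv t) z))) =
          (\<lambda>n. znorm p (zminus (S (permz t (u (r n)))) z))"
      by (simp add: conjz_def permz_ops(3)[symmetric] permz_norm[OF it(1)])
    thus "\<exists>r z. strict_mono r \<and> z \<in> Zp p \<and>
        (\<lambda>n. znorm p (zminus (conjz t S (u (r n))) z)) \<longlonglongrightarrow> 0"
      using rz permz_Zp[OF it] by metis
  qed
qed

lemma conjz_IA:
  fixes S :: "('y::banach \<times> (nat \<Rightarrow> 'x::banach)) \<Rightarrow> ('y \<times> (nat \<Rightarrow> 'x))"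
  assumes t: "bij t" "t 0 = 0" and S: "S \<in> IA p A" and BA: "B \<subseteq> t ` A"
  shows "conjz t S \<in> IA p B"
proof -
  have K: "conjz t S \<in> Kz p" using S unfolding IA_def by (blast intro: conjz_Kz[OF t])
  have e0: "(\<lambda>y. P0 (conjz t S (J0 y))) = (\<lambda>y. P0 (S (J0 y)))"
    by (simp add: conjz_def permz_ops)
  have ek: "(\<lambda>x. P0 (conjz t S (Jk k x))) = (\<lambda>x. P0 (S (Jk (inv t k) x)))" for k
    by (simp add: conjz_def permz_ops permz_Jk[OF t(1)])
  have "inv t k \<in> A" if "k \<in> B" for k
    using that BA t(1) by (auto simp: bij_is_inj)
  thus ?thesis using S K e0 ek unfolding IA_def by auto
qed

lemma conjz_opnorm:
  fixes S :: "('y::banach \<times> (nat \<Rightarrow> 'x::banach)) \<Rightarrow> ('y \<times> (nat \<Rightarrow> 'x))"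
  assumes t: "bij t" "t 0 = 0"
  shows "opnorm_z p (conjz t S) = opnorm_z p S"
proof -
  note it = inv_props[OF t]
  let ?B = "{z \<in> Zp p. znorm p z \<le> 1} :: ('y \<times> (nat \<Rightarrow> 'x)) set"
  have im: "permz t ` ?B = ?B"
  proof
    show "permz t ` ?B \<subseteq> ?B" by (auto simp: permz_Zp[OF t] permz_norm[OF t(1)])
    show "?B \<subseteq> permz t ` ?B"
    proof
      fix z :: "'y \<times> (nat \<Rightarrow> 'x)" assume "z \<in> ?B"
      hence "permz (inv t) z \<in> ?B" by (auto simp: permz_Zp[OF it] permz_norm[OF it(1)])
      moreover have "z = permz t (permz (inv t) z)" by (simp add: permz_inv[OF t(1)])
      ultimately show "z \<in> permz t ` ?B" by blast
    qed
  qed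
  have "opnorm_z p (conjz t S) = (SUP z\<in>?B. znorm p (S (permz t z)))"
    unfolding opnorm_z_def conjz_def by (simp add: permz_norm[OF it(1)])
  also have "\<dots> = (SUP w\<in>permz t ` ?B. znorm p (S w))" by (simp add: image_comp)
  also have "\<dots> = opnorm_z p S" unfolding opnorm_z_def im ..
  finally show ?thesis .
qed

theorem lemma2p2:
  fixes p :: real and A B :: "nat set"
  assumes p: "1 < p"
    and AP: "approximation_property TYPE('x::banach)"
    and strict: "{T :: 'x \<Rightarrow> 'y::banach. approximable_op T} \<subset> {T. compact_op T}"
    and A: "A \<noteq> {}" "A \<subset> {1..}"
    and B: "B \<noteq> {}" "B \<subset> {1..}"
    and perm: "(\<exists>\<sigma>. bij_betw \<sigma> {1..} {1..} \<and> \<sigma> ` A = B)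
             \<or> (((finite A \<and> finite B \<and> card A = card B) \<or> (infinite A \<and> infinite B))
                \<and> ((finite ({1..} - A) \<and> finite ({1..} - B) \<and> card ({1..} - A) = card ({1..} - B))
                   \<or> (infinite ({1..} - A) \<and> infinite ({1..} - B))))"
  shows "isomorphic_banach_alg p (IA p A :: (('y \<times> (nat \<Rightarrow> 'x)) \<Rightarrow> ('y \<times> (nat \<Rightarrow> 'x))) set) (IA p B)"
proof -
  obtain t where t: "bij t" "t 0 = 0" and tA: "t ` A = B"
    using get_perm[OF A(2) B(2) perm] by blast
  note it = inv_props[OF t]
  have iit: "inv (inv t) = t" using t(1) by (simp add: inv_inv_eq)
  have invA: "inv t ` B = A" using tA t(1) by (auto simp: bij_is_inj)
  have w1: "conjz (inv t) (conjz t S) = S" for S :: "('y \<times> (nat \<Rightarrow> 'x)) \<Rightarrow> ('y \<times> (nat \<Rightarrow> 'x))"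
    by (simp add: conjz_def iit permz_inv[OF t(1)])
  have w2: "conjz t (conjz (inv t) S) = S" for S :: "('y \<times> (nat \<Rightarrow> 'x)) \<Rightarrow> ('y \<times> (nat \<Rightarrow> 'x))"
    by (simp add: conjz_def iit permz_inv[OF t(1)])
  have bij: "bij_betw (conjz t) (IA p A :: (('y \<times> (nat \<Rightarrow> 'x)) \<Rightarrow> ('y \<times> (nat \<Rightarrow> 'x))) set) (IA p B)"
    apply (rule bij_betw_byWitness[where f'="conjz (inv t)"])
    subgoal using w1 by blast
    subgoal using w2 by blast
    subgoal using conjz_IA[OF t _, of _ p A B] tA by blast
    subgoal using conjz_IA[OF it _, of _ p B A] invA by blast
    done
  have "banach_alg_iso p (IA p A :: (('y \<times> (nat \<Rightarrow> 'x)) \<Rightarrow> ('y \<times> (nat \<Rightarrow> 'x))) set) (IA p B) (conjz t)"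
    unfolding banach_alg_iso_def
  proof (intro conjI bij ballI allI)
    fix S T :: "('y \<times> (nat \<Rightarrow> 'x)) \<Rightarrow> ('y \<times> (nat \<Rightarrow> 'x))"
    show "conjz t (\<lambda>z. zadd (S z) (T z)) = (\<lambda>z. zadd (conjz t S z) (conjz t T z))"
      by (simp add: conjz_def permz_ops)
    show "conjz t (S \<circ> T) = conjz t S \<circ> conjz t T"
      by (simp add: conjz_def permz_inv[OF t(1)] fun_eq_iff)
  next
    fix c and S :: "('y \<times> (nat \<Rightarrow> 'x)) \<Rightarrow> ('y \<times> (nat \<Rightarrow> 'x))"
    show "conjz t (\<lambda>z. zscale c (S z)) = (\<lambda>z. zscale c (conjz t S z))"
      by (simp add: conjz_def permz_ops)
  next
    show "\<exists>C. \<forall>S\<in>IA p A. opnorm_z p (conjz t S) \<le> C * opnorm_z p S"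
      by (intro exI[of _ 1]) (simp add: conjz_opnorm[OF t])
    show "\<exists>C. \<forall>S\<in>IA p A. opnorm_z p S \<le> C * opnorm_z p (conjz t S)"
      by (intro exI[of _ 1]) (simp add: conjz_opnorm[OF t])
  qed
  thus ?thesis unfolding isomorphic_banach_alg_def by blast
qed

end
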